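(* Let $\alpha\in[0,1)$, let $n\geq f(\alpha)$, and let $s$ be an integer with $2\leq s\leq\frac{n-2}{3}$. Then $\rho_{\alpha}\big(K_s\vee(K_{n-3s}\cup 2sK_1)\big)<\eta(n)$. (For $s=1$ one has $\rho_{\alpha}(K_1\vee(K_{n-3}\cup 2K_1))=\eta(n)$.)
   Context: For a graph $G$, $A_{\alpha}(G)=\alpha D(G)+(1-\alpha)A(G)$ where $D(G)$ is the diagonal degree matrix and $A(G)$ the adjacency matrix, and $\rho_{\alpha}(G)$ is the largest eigenvalue of $A_{\alpha}(G)$. $\vee$ denotes join, $\cup$ disjoint union, $K_m$ the complete graph on $m$ vertices, $tK_1$ the edgeless graph on $t$ vertices. Define $f(\alpha)=14$ if $\alpha\in[0,\frac12]$, $f(\alpha)=17$ if $\alpha\in(\frac12,\frac23]$, $f(\alpha)=20$ if $\alpha\in(\frac23,\frac34]$, and $f(\alpha)=\frac{5}{1-\alpha}+1$ if $\alpha\in(\frac34,1)$. $\eta(n)$ is the largest root of $x^{3}-((\alpha+1)n+\alpha-4)x^{2}+(\alpha n^{2}+(\alpha^{2}-2\alpha-1)n-2\alpha+1)x-\alpha^{2}n^{2}+(5\alpha^{2}-3\alpha+2)n-10\alpha^{2}+15\alpha-8=0$. *)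

theory Defs
  imports "Jordan_Normal_Form.Char_Poly"
begin

text \<open>A (simple) graph on the vertex set {0..<n}, given by its order and a symmetric,
  irreflexive adjacency predicate (only its values on {0..<n} matter).\<close>
type_synonym graph = "nat \<times> (nat \<Rightarrow> nat \<Rightarrow> bool)"

definition complete_graph :: "nat \<Rightarrow> graph" where
  "complete_graph m = (m, \<lambda>i j. i \<noteq> j)"

definition edgeless_graph :: "nat \<Rightarrow> graph" where
  "edgeless_graph t = (t, \<lambda>i j. False)"

definition graph_union :: "graph \<Rightarrow> graph \<Rightarrow> graph" where
  "graph_union G H = (fst G + fst H, \<lambda>i j.
     if i < fst G \<and> j < fst G then snd G i j
     else if fst G \<le> i \<and> fst G \<le> j then snd H (i - fst G) (j - fst G)
     else False)"

definition graph_join :: "graph \<Rightarrow> graph \<Rightarrow> graph" where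
  "graph_join G H = (fst G + fst H, \<lambda>i j.
     if i < fst G \<and> j < fst G then snd G i j
     else if fst G \<le> i \<and> fst G \<le> j then snd H (i - fst G) (j - fst G)
     else True)"

definition degree :: "graph \<Rightarrow> nat \<Rightarrow> nat" where
  "degree G i = card {j. j < fst G \<and> snd G i j}"

definition A_alpha :: "real \<Rightarrow> graph \<Rightarrow> real mat" where
  "A_alpha \<alpha> G = mat (fst G) (fst G) (\<lambda>(i, j).
     \<alpha> * (if i = j then real (degree G i) else 0)
     + (1 - \<alpha>) * (if snd G i j then 1 else 0))"

definition rho_alpha :: "real \<Rightarrow> graph \<Rightarrow> real" where
  "rho_alpha \<alpha> G = Max {x. eigenvalue (A_alpha \<alpha> G) x}"

definition f_bound :: "real \<Rightarrow> real" where
  "f_bound \<alpha> = (if \<alpha> \<le> 1/2 then 14 else if \<alpha> \<le> 2/3 then 17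
                  else if \<alpha> \<le> 3/4 then 20 else 5 / (1 - \<alpha>) + 1)"

definition eta_poly :: "real \<Rightarrow> nat \<Rightarrow> real \<Rightarrow> real" where
  "eta_poly \<alpha> n x = x ^ 3 - ((\<alpha> + 1) * real n + \<alpha> - 4) * x ^ 2
     + (\<alpha> * (real n)^2 + (\<alpha>^2 - 2*\<alpha> - 1) * real n - 2*\<alpha> + 1) * x
     - \<alpha>^2 * (real n)^2 + (5*\<alpha>^2 - 3*\<alpha> + 2) * real n - 10*\<alpha>^2 + 15*\<alpha> - 8"

definition eta :: "real \<Rightarrow> nat \<Rightarrow> real" where
  "eta \<alpha> n = Max {x. eta_poly \<alpha> n x = 0}"

end

theory Submission
  imports Defs
begin


lemma key_ineq:
  fixes b m s :: real
  assumes b0: "0<b" and b1: "b\<le>1" and s2: "2\<le>s" and m2: "2\<le>m" and bn: "b*m + 3*(b*s) \<ge> 5"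
  shows "m*(b*(1-b)*(m+2*s-3+b*s) + 2*(b*s) - 2) + 4*(b*s-1)*(s-2) - 2 \<ge> 0"
proof -
  define t where "t = b*s"
  have t0: "t > 0" using b0 s2 t_def by simp
  have e: "m*(b*(1-b)*(m+2*s-3+b*s) + 2*(b*s) - 2) + 4*(b*s-1)*(s-2) - 2
      = (1-b)*(b*m)*(m+2*s-3+t) + m*(2*t-2) + 4*(t-1)*(s-2) - 2"
    unfolding t_def by (simp add: algebra_simps)
  have pos: "m+2*s-3+t \<ge> 3" using m2 s2 t0 by linarith
  show ?thesis
  proof (cases "t \<ge> 1")
    case True
    note t1 = True
    have pos4: "m+2*s-3+t \<ge> 4" using m2 s2 True by linarith
    have X: "(1-b)*(b*m)*(m+2*s-3+t) \<ge> 0" using b0 b1 m2 pos by simp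
    have Y: "m*(2*t-2) \<ge> 2*(2*t-2)" using True m2 by (intro mult_right_mono) auto
    have Z: "4*(t-1)*(s-2) \<ge> 0" using True s2 by simp
    show ?thesis
    proof (cases "t \<ge> 3/2")
      case True
      have Y': "m*(2*t-2) \<ge> 4*t-4" using Y by simp
      show ?thesis unfolding e using X Y' Z True by linarith
    next
      case False
      have "b*s < 3/2" using False t_def by simp
      moreover have "b*2 \<le> b*s" using s2 b0 by simp
      ultimately have b34: "1 - b \<ge> 1/4" by linarith
      have bm: "b*m \<ge> 5 - 3*t" using bn t_def by simp
      have "(1/4)*(5-3*t) \<le> (1-b)*(b*m)"
        using b34 bm False by (intro mult_mono) auto
      hence "(1/4)*(5-3*t)*4 \<le> (1-b)*(b*m)*(m+2*s-3+t)"
        using pos4 b34 False bm by (intro mult_mono) auto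
      hence X': "(1-b)*(b*m)*(m+2*s-3+t) \<ge> 5-3*t" by simp
      have Y': "m*(2*t-2) \<ge> 4*t-4" using Y by simp
      have fin: "\<And>X Y Z. X \<ge> 5-3*t \<Longrightarrow> Y \<ge> 4*t-4 \<Longrightarrow> Z \<ge> 0 \<Longrightarrow> X+Y+Z-2 \<ge> 0"
        using t1 by linarith
      show ?thesis unfolding e by (rule fin[OF X' Y' Z])
    qed
  next
    case False
    have "b*s < 1" using False t_def by simp
    moreover have "b*2 \<le> b*s" using s2 b0 by simp
    ultimately have b12: "1 - b \<ge> 1/2" by linarith
    have bm: "b*m \<ge> 5 - 3*t" using bn t_def by simp
    have pos2: "2*s-3+t > 0" using s2 t0 by linarith
    have A: "(1-b)*(b*m)*(m+2*s-3+t) \<ge> (1/2)*(5-3*t)*(m+2*s-3+t)"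
      using b12 bm False pos by (intro mult_mono) auto
    have B: "(1/2)*(5-3*t)*(m+2*s-3+t) = (5-3*t)*m/2 + (5-3*t)*(2*s-3+t)/2"
      by (simp add: field_simps)
    have C: "(5-3*t)*m/2 + m*(2*t-2) = m*(1+t)/2" by (simp add: field_simps)
    have C2: "m*(1+t)/2 \<ge> 1" using m2 t0 
    proof -
      have "m*(1+t) \<ge> 2*1" using m2 t0 by (intro mult_mono) auto
      thus ?thesis by simp
    qed
    have D: "(5-3*t)*(2*s-3+t) + 8*(t-1)*(s-2) - 2 = (2+2*t)*(s-2) + (3 + 2*t - 3*t^2)"
      by (simp add: algebra_simps power2_eq_square)
    have D1: "(2+2*t)*(s-2) \<ge> 0" using t0 s2 by simp
    have D2: "3 + 2*t - 3*t^2 \<ge> 0"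
    proof -
      have "t^2 \<le> t" using t0 False by (simp add: power2_eq_square mult_le_cancel_right1 less_imp_le)
      thus ?thesis using t0 False by linarith
    qed
    show ?thesis unfolding e using A B C C2 D D1 D2 by linarith
  qed
qed



lemma eig_bound:
  fixes A :: "real mat" and u :: "nat \<Rightarrow> real"
  assumes A: "A \<in> carrier_mat N N"
    and nn: "\<And>i j. i < N \<Longrightarrow> j < N \<Longrightarrow> A $$ (i,j) \<ge> 0"
    and up: "\<And>i. i < N \<Longrightarrow> u i > 0"
    and row: "\<And>i. i < N \<Longrightarrow> (\<Sum>j<N. A $$ (i,j) * u j) \<le> lam * u i"
    and ev: "eigenvalue A k"
  shows "\<bar>k\<bar> \<le> lam"
proof -
  from ev obtain v where v: "v \<in> carrier_vec N" "v \<noteq> 0\<^sub>v N" "A *\<^sub>v v = k \<cdot>\<^sub>v v"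
    unfolding eigenvalue_def eigenvector_def using A by auto
  have dv: "dim_vec v = N" using v by auto
  obtain j0 where j0: "j0 < N" "v $ j0 \<noteq> 0"
    using v(2) dv by (metis eq_vecI index_zero_vec(1) index_zero_vec(2))
  define r where "r = (\<lambda>j. \<bar>v $ j\<bar> / u j)"
  have fin: "finite (r ` {..<N})" by simp
  have ne: "r ` {..<N} \<noteq> {}" using j0 by auto
  obtain i where i: "i < N" "r i = Max (r ` {..<N})"
    using Max_in[OF fin ne] by auto
  have rmax: "\<And>j. j < N \<Longrightarrow> r j \<le> r i" using i fin by auto
  have rj0: "r j0 > 0" unfolding r_def using j0 up[of j0] by simp
  have ri: "r i > 0" using rmax[OF j0(1)] rj0 by linarith
  have vj: "\<And>j. j < N \<Longrightarrow> \<bar>v $ j\<bar> \<le> r i * u j"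
  proof -
    fix j assume j: "j < N"
    have "\<bar>v $ j\<bar> = r j * u j" unfolding r_def using up[OF j] by simp
    also have "\<dots> \<le> r i * u j" using rmax[OF j] up[OF j] by (intro mult_right_mono) auto
    finally show "\<bar>v $ j\<bar> \<le> r i * u j" .
  qed
  have vi: "\<bar>v $ i\<bar> = r i * u i" unfolding r_def using up[OF i(1)] by simp
  have "(A *\<^sub>v v) $ i = (\<Sum>j<N. A $$ (i,j) * v $ j)"
    using A i(1) dv by (simp add: scalar_prod_def atLeast0LessThan)
  hence eq: "k * v $ i = (\<Sum>j<N. A $$ (i,j) * v $ j)" using v(3) i(1) dv by simp
  have "\<bar>k\<bar> * (r i * u i) = \<bar>k * v $ i\<bar>" using vi by (simp add: abs_mult)
  also have "\<dots> \<le> (\<Sum>j<N. \<bar>A $$ (i,j) * v $ j\<bar>)" unfolding eq by (rule sum_abs)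
  also have "\<dots> \<le> (\<Sum>j<N. A $$ (i,j) * (r i * u j))"
  proof (rule sum_mono)
    fix j assume "j \<in> {..<N}"
    hence j: "j < N" by simp
    show "\<bar>A $$ (i,j) * v $ j\<bar> \<le> A $$ (i,j) * (r i * u j)"
      using nn[OF i(1) j] vj[OF j] by (simp add: abs_mult mult_left_mono)
  qed
  also have "\<dots> = r i * (\<Sum>j<N. A $$ (i,j) * u j)"
    by (simp add: sum_distrib_left algebra_simps)
  also have "\<dots> \<le> r i * (lam * u i)" using row[OF i(1)] ri by simp
  finally have "\<bar>k\<bar> * (r i * u i) \<le> lam * (r i * u i)" by (simp add: algebra_simps)
  moreover have "r i * u i > 0" using ri up[OF i(1)] by simp
  ultimately show ?thesis using mult_le_cancel_right_pos by blast
qed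



lemma eta_poly_n3: "eta_poly a n (real n - 3) = -2*(1-a)^2 - 2*a*(1-a)*(real n - 4)"
  unfolding eta_poly_def by (simp add: algebra_simps power2_eq_square power3_eq_cube)

lemma eta_poly_n1: "eta_poly a n (real n - 1) = (1-a)*(2*(real n)^2 - 2*real n - 6 - (4*real n-10)*a)"
  unfolding eta_poly_def by (simp add: algebra_simps power2_eq_square power3_eq_cube)

lemma eta_gt:
  assumes a0: "0 \<le> a" and a1: "a < 1" and n4: "real n \<ge> 4"
  shows "eta a n > real n - 3"
proof -
  define p where "p = pCons ((real n)^2 * (0 - a^2) + (5*a^2 - 3*a + 2) * real n - 10*a^2 + 15*a - 8)
     (pCons (a * (real n)^2 + (a^2 - 2*a - 1) * real n - 2*a + 1) (pCons (0 - ((a + 1) * real n + a - 4)) (pCons 1 0)))"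
  have pe: "\<And>x. eta_poly a n x = poly p x"
    unfolding p_def eta_poly_def by (simp add: algebra_simps power2_eq_square power3_eq_cube)
  have p0: "p \<noteq> 0" unfolding p_def by simp
  have fin: "finite {x. eta_poly a n x = 0}" using poly_roots_finite[OF p0] by (simp add: pe)
  have lo: "eta_poly a n (real n - 3) < 0"
  proof -
    have "(1-a)^2 > 0" using a1 by simp
    moreover have "a*(1-a)*(real n - 4) \<ge> 0" using a0 a1 n4 by simp
    ultimately show ?thesis unfolding eta_poly_n3 by linarith
  qed
  have hi: "eta_poly a n (real n - 1) > 0"
  proof -
    have "(4*real n-10)*a \<le> (4*real n-10)*1" using a0 a1 n4 by (intro mult_left_mono) auto
    hence h1: "(4*real n-10)*a \<le> 4*real n-10" by simp
    moreover have "2*(real n)^2 - 6*real n + 4 > 0"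
    proof -
      have "2*(real n)^2 - 6*real n + 4 = 2*(real n - 1)*(real n - 2)" by (simp add: algebra_simps power2_eq_square)
      thus ?thesis using n4 by simp
    qed
    ultimately have "2*(real n)^2 - 2*real n - 6 - (4*real n-10)*a > 0" using h1 by linarith
    thus ?thesis unfolding eta_poly_n1 using a1 by simp
  qed
  have "\<exists>x\<ge>real n - 3. x \<le> real n - 1 \<and> poly p x = 0"
    by (rule IVT') (use lo hi in \<open>auto simp: pe intro: continuous_intros\<close>)
  then obtain x where x: "x \<ge> real n - 3" "eta_poly a n x = 0" by (auto simp: pe)
  have "x \<noteq> real n - 3" using x lo by auto
  hence "x > real n - 3" using x by simp
  moreover have "x \<le> eta a n" unfolding eta_def using fin x by (intro Max_ge) auto
  ultimately show ?thesis by simp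
qed



definition GG :: "nat \<Rightarrow> nat \<Rightarrow> graph" where
  "GG n s = graph_join (complete_graph s)
           (graph_union (complete_graph (n - 3 * s)) (edgeless_graph (2 * s)))"

lemma GG_fst: "3*s \<le> n \<Longrightarrow> fst (GG n s) = n"
  unfolding GG_def graph_join_def graph_union_def complete_graph_def edgeless_graph_def by simp

lemma GG_adj: "snd (GG n s) i j = (i \<noteq> j \<and> (i < s \<or> j < s \<or> (i < s + (n-3*s) \<and> j < s + (n-3*s))))"
  unfolding GG_def graph_join_def graph_union_def complete_graph_def edgeless_graph_def by auto

lemma GG_deg_S: assumes "3*s \<le> n" "i < s" shows "degree (GG n s) i = n - 1"
proof -
  have "{j. j < fst (GG n s) \<and> snd (GG n s) i j} = {..<n} - {i}"
    using assms by (auto simp: GG_fst GG_adj)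
  moreover have "i \<in> {..<n}" using assms by simp
  ultimately show ?thesis unfolding degree_def by simp
qed

lemma GG_deg_C: assumes "3*s \<le> n" "s \<le> i" "i < s + (n-3*s)" shows "degree (GG n s) i = s + (n-3*s) - 1"
proof -
  have "{j. j < fst (GG n s) \<and> snd (GG n s) i j} = {..<s + (n-3*s)} - {i}"
    using assms by (auto simp: GG_fst GG_adj)
  moreover have "i \<in> {..<s + (n-3*s)}" using assms by simp
  ultimately show ?thesis unfolding degree_def by simp
qed

lemma GG_deg_I: assumes "3*s \<le> n" "s + (n-3*s) \<le> i" shows "degree (GG n s) i = s"
proof -
  have "{j. j < fst (GG n s) \<and> snd (GG n s) i j} = {..<s}"
    using assms by (auto simp: GG_fst GG_adj)
  thus ?thesis unfolding degree_def by simp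
qed


lemma GG_nbr_S: assumes "3*s \<le> n" "i < s" shows "{j. j < n \<and> snd (GG n s) i j} = {..<n} - {i}"
  using assms by (auto simp: GG_adj)
lemma GG_nbr_C: assumes "3*s \<le> n" "s \<le> i" "i < s + (n-3*s)"
  shows "{j. j < n \<and> snd (GG n s) i j} = {..<s + (n-3*s)} - {i}"
  using assms by (auto simp: GG_adj)
lemma GG_nbr_I: assumes "3*s \<le> n" "s + (n-3*s) \<le> i" shows "{j. j < n \<and> snd (GG n s) i j} = {..<s}"
  using assms by (auto simp: GG_adj)

lemma A_carrier: "3*s \<le> n \<Longrightarrow> A_alpha a (GG n s) \<in> carrier_mat n n"
  unfolding A_alpha_def by (simp add: GG_fst)

lemma A_entry: "3*s \<le> n \<Longrightarrow> i < n \<Longrightarrow> j < n \<Longrightarrow> A_alpha a (GG n s) $$ (i,j) =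
   a * (if i = j then real (degree (GG n s) i) else 0) + (1 - a) * (if snd (GG n s) i j then 1 else 0)"
  unfolding A_alpha_def by (simp add: GG_fst)

lemma A_row: assumes "3*s \<le> n" "i < n"
  shows "(\<Sum>j<n. A_alpha a (GG n s) $$ (i,j) * u j) =
     a * real (degree (GG n s) i) * u i + (1 - a) * sum u {j. j < n \<and> snd (GG n s) i j}"
proof -
  have "(\<Sum>j<n. A_alpha a (GG n s) $$ (i,j) * u j) =
     (\<Sum>j<n. (if j = i then a * real (degree (GG n s) i) * u j else 0) + (1-a) * (if snd (GG n s) i j then u j else 0))"
    by (rule sum.cong) (use assms in \<open>auto simp: A_entry algebra_simps\<close>)
  also have "\<dots> = a * real (degree (GG n s) i) * u i + (1 - a) * (\<Sum>j<n. if snd (GG n s) i j then u j else 0)"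
    using assms by (simp add: sum.distrib sum_distrib_left[symmetric])
  also have "(\<Sum>j<n. if snd (GG n s) i j then u j else 0) = sum u {j. j < n \<and> snd (GG n s) i j}"
    by (simp add: sum.inter_filter[symmetric] lessThan_def Collect_conj_eq[symmetric])
  finally show ?thesis .
qed

lemma sum_split: "k1 \<le> k2 \<Longrightarrow> sum (u::nat\<Rightarrow>real) {..<k2} = sum u {..<k1} + sum u {k1..<k2}"
proof -
  assume "k1 \<le> k2"
  hence "{..<k2} = {..<k1} \<union> {k1..<k2}" by auto
  moreover have "sum u ({..<k1} \<union> {k1..<k2}) = sum u {..<k1} + sum u {k1..<k2}"
    by (rule sum.union_disjoint) auto
  ultimately show ?thesis by simp
qed



lemma rows:
  fixes a :: real and n s :: nat
  assumes a0: "0 \<le> a" and a1: "a < 1" and s2: "2 \<le> s" and sn: "3*s + 2 \<le> n"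
    and bn: "(1-a) * real n \<ge> 5" and i: "i < n"
  defines "D \<equiv> real n - 3 - a * real s"
  defines "u \<equiv> (\<lambda>j. if j < s then D else if j < s + (n-3*s) then (1-a)*D else (1-a)*real s)"
  shows "(\<Sum>j<n. A_alpha a (GG n s) $$ (i,j) * u j) \<le> (real n - 3) * u i"
proof -
  define m where "m = n - 3*s"
  have sn3: "3*s \<le> n" using sn by simp
  have snr: "3 * real s + 2 \<le> real n"
  proof -
    have "real (3*s+2) \<le> real n" using sn by (simp only: of_nat_le_iff)
    thus ?thesis by simp
  qed
  have s2r: "2 \<le> real s" using s2 by simp
  have rm: "real m = real n - 3 * real s" unfolding m_def using sn3 by (simp add: of_nat_diff)
  have m2: "real m \<ge> 2" using rm snr by linarith
  have Dpos: "D > 0" unfolding D_def using a1 sn s2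
  proof -
    have "a * real s \<le> 1 * real s" using a1 by (intro mult_right_mono) auto
    thus "real n - 3 - a * real s > 0" using snr s2r by linarith
  qed
  have u_def': "u = (\<lambda>j. if j < s then D else if j < s + m then (1-a)*D else (1-a)*real s)"
    unfolding u_def m_def by simp
  have s1: "sum u {..<s} = real s * D"
  proof -
    have "sum u {..<s} = sum (\<lambda>j. D) {..<s}" by (rule sum.cong) (auto simp: u_def')
    thus ?thesis by simp
  qed
  have s2': "sum u {s..<s+m} = real m * ((1-a)*D)"
  proof -
    have "sum u {s..<s+m} = sum (\<lambda>j. (1-a)*D) {s..<s+m}" by (rule sum.cong) (auto simp: u_def')
    thus ?thesis by simp
  qed
  have nsm: "n = s + m + 2*s" unfolding m_def using sn3 by simp
  have s3': "sum u {s+m..<n} = real (2*s) * ((1-a)*real s)"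
  proof -
    have "sum u {s+m..<n} = sum (\<lambda>j. (1-a)*real s) {s+m..<n}" by (rule sum.cong) (auto simp: u_def')
    thus ?thesis using nsm by simp
  qed
  have Usm: "sum u {..<s+m} = real s * D + real m * ((1-a)*D)"
    using sum_split[of s "s+m" u] s1 s2' by simp
  have Un: "sum u {..<n} = real s * D + real m * ((1-a)*D) + real (2*s) * ((1-a)*real s)"
    using sum_split[of "s+m" n u] Usm s3' nsm by simp
  have row: "(\<Sum>j<n. A_alpha a (GG n s) $$ (i,j) * u j) =
     a * real (degree (GG n s) i) * u i + (1 - a) * sum u {j. j < n \<and> snd (GG n s) i j}"
    by (rule A_row[OF sn3 i])
  consider (S) "i < s" | (C) "s \<le> i" "i < s + m" | (I) "s + m \<le> i" by linarith
  then show ?thesis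
  proof cases
    case S
    have ui: "u i = D" using S by (simp add: u_def')
    have nb: "sum u {j. j < n \<and> snd (GG n s) i j} = sum u {..<n} - D"
      using GG_nbr_S[OF sn3 S] S i ui by (simp add: sum_diff1)
    have dg: "real (degree (GG n s) i) = real n - 1" using GG_deg_S[OF sn3 S] i by (simp add: of_nat_diff)
    have hbm: "(1-a)*real m + 3*((1-a)*real s) \<ge> 5"
    proof -
      have "(1-a)*real m + 3*((1-a)*real s) = (1-a) * real n" unfolding rm by (simp add: algebra_simps)
      thus ?thesis using bn by simp
    qed
    have K: "0 \<le> real m*((1-a)*(1-(1-a))*(real m+2*real s-3+(1-a)*real s) + 2*((1-a)*real s) - 2)
              + 4*((1-a)*real s-1)*(real s-2) - 2"
      by (rule key_ineq) (use a0 a1 s2r m2 hbm in auto)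
    have "(real n - 3) * D - (a * (real n - 1) * D + (1 - a) * (sum u {..<n} - D)) =
       real m*((1-a)*(1-(1-a))*(real m+2*real s-3+(1-a)*real s) + 2*((1-a)*real s) - 2)
              + 4*((1-a)*real s-1)*(real s-2) - 2"
      unfolding Un D_def rm by (simp add: algebra_simps)
    thus ?thesis unfolding row nb dg ui using K by linarith
  next
    case C
    have ui: "u i = (1-a)*D" using C by (simp add: u_def')
    have nb: "sum u {j. j < n \<and> snd (GG n s) i j} = sum u {..<s+m} - (1-a)*D"
      using GG_nbr_C[OF sn3] C ui m_def by (simp add: sum_diff1)
    have dg: "real (degree (GG n s) i) = real s + real m - 1" using GG_deg_C[OF sn3] C s2 m_def by (simp add: of_nat_diff)
    have e: "(real n - 3) * ((1-a)*D) - (a * (real s + real m - 1) * ((1-a)*D) + (1 - a) * (sum u {..<s+m} - (1-a)*D))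
       = ((1-a)*D) * (2 * real s - 2 - a * real s)"
      unfolding Usm rm by (simp add: algebra_simps)
    have "a * real s \<le> 1 * real s" using a1 by (intro mult_right_mono) auto
    hence "2 * real s - 2 - a * real s \<ge> 0" using s2r by linarith
    moreover have "(1-a)*D \<ge> 0" using a1 Dpos by simp
    ultimately have "((1-a)*D) * (2 * real s - 2 - a * real s) \<ge> 0" by simp
    thus ?thesis unfolding row nb dg ui using e by linarith
  next
    case I
    have ui: "u i = (1-a)*real s" using I by (simp add: u_def')
    have nb: "sum u {j. j < n \<and> snd (GG n s) i j} = real s * D"
      using GG_nbr_I[OF sn3] I m_def s1 by simp
    have dg: "real (degree (GG n s) i) = real s" using GG_deg_I[OF sn3] I m_def by simp
    have "(real n - 3) * ((1-a)*real s) = a * real s * ((1-a)*real s) + (1 - a) * (real s * D)"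
      unfolding D_def by (simp add: algebra_simps)
    thus ?thesis unfolding row nb dg ui by linarith
  qed
qed



lemma fb:
  assumes a0: "0 \<le> a" and a1: "a < 1" and f: "real n \<ge> f_bound a"
  shows "(1-a) * real n \<ge> 5" "real n \<ge> 6"
proof -
  have "(1-a) * real n \<ge> 5 \<and> real n \<ge> 6"
  proof (cases "a \<le> 1/2")
    case True
    hence n: "real n \<ge> 14" using f unfolding f_bound_def by simp
    have "(1/2) * 14 \<le> (1-a) * real n" using True n by (intro mult_mono) auto
    thus ?thesis using n by simp
  next
    case F1: False
    show ?thesis
    proof (cases "a \<le> 2/3")
      case True
      hence n: "real n \<ge> 17" using f F1 unfolding f_bound_def by simp
      have "(1/3) * 17 \<le> (1-a) * real n" using True n by (intro mult_mono) auto
      thus ?thesis using n by simp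
    next
      case F2: False
      show ?thesis
      proof (cases "a \<le> 3/4")
        case True
        hence n: "real n \<ge> 20" using f F1 F2 unfolding f_bound_def by simp
        have "(1/4) * 20 \<le> (1-a) * real n" using True n by (intro mult_mono) auto
        thus ?thesis using n by simp
      next
        case False
        hence n: "real n \<ge> 5/(1-a) + 1" using f F1 F2 unfolding f_bound_def by simp
        have b: "1 - a > 0" using a1 by simp
        have "(1-a) * real n \<ge> (1-a) * (5/(1-a) + 1)" using n b by (intro mult_left_mono) auto
        also have "(1-a) * (5/(1-a) + 1) = 5 + (1-a)" using b by (simp add: field_simps)
        finally have h: "(1-a) * real n \<ge> 5 + (1-a)" .
        have "5/(1-a) \<ge> 5" using b a0 by (simp add: field_simps)
        thus ?thesis using h b n by linarith
      qed
    qed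
  qed
  thus "(1-a) * real n \<ge> 5" "real n \<ge> 6" by auto
qed

lemma eig_exists:
  assumes sn: "3*s + 2 \<le> n" and s1: "1 \<le> s"
  shows "eigenvalue (A_alpha a (GG n s)) (a * real s)"
proof -
  have sn3: "3*s \<le> n" using sn by simp
  define A where "A = A_alpha a (GG n s)"
  have A: "A \<in> carrier_mat n n" unfolding A_def by (rule A_carrier[OF sn3])
  define v where "v = vec n (\<lambda>j. (if j = n-1 then 1 else 0) - (if j = n-2 then (1::real) else 0))"
  have nn: "n - 1 \<noteq> n - 2" "n-1 < n" "n-2 < n" using sn by auto
  have v: "v \<in> carrier_vec n" unfolding v_def by simp
  have vn: "v \<noteq> 0\<^sub>v n"
  proof
    assume "v = 0\<^sub>v n"
    hence "v $ (n-1) = 0" using nn by simp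
    thus False unfolding v_def using nn by simp
  qed
  have dI: "degree (GG n s) c = s" if "c = n-1 \<or> c = n-2" for c
  proof -
    have "s + (n-3*s) \<le> c" using that sn s1 by auto
    thus ?thesis by (rule GG_deg_I[OF sn3])
  qed
  have "A *\<^sub>v v = (a * real s) \<cdot>\<^sub>v v"
  proof (rule eq_vecI)
    show "dim_vec (A *\<^sub>v v) = dim_vec ((a * real s) \<cdot>\<^sub>v v)" using A v by simp
    fix i assume "i < dim_vec ((a * real s) \<cdot>\<^sub>v v)"
    hence i: "i < n" using v by simp
    have "(A *\<^sub>v v) $ i = (\<Sum>j<n. A $$ (i,j) * v $ j)"
      using A i v by (simp add: scalar_prod_def atLeast0LessThan)
    also have "\<dots> = (\<Sum>j<n. (if j = n-1 then A $$ (i,n-1) else 0) - (if j = n-2 then A $$ (i,n-2) else 0))"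
      by (rule sum.cong) (auto simp: v_def)
    also have "\<dots> = A $$ (i,n-1) - A $$ (i,n-2)"
      using nn by (simp add: sum_subtractf)
    also have "\<dots> = (a * real s) * v $ i"
    proof -
      have c1: "\<not> n-1 < s + (n-3*s)" "\<not> n-2 < s + (n-3*s)" "\<not> n-1 < s" "\<not> n-2 < s"
        using sn s1 by auto
      show ?thesis
        unfolding A_def using nn i sn3 c1
        by (auto simp: A_entry GG_adj dI v_def)
    qed
    finally show "(A *\<^sub>v v) $ i = ((a * real s) \<cdot>\<^sub>v v) $ i" using i v by simp
  qed
  thus ?thesis unfolding A_def[symmetric] eigenvalue_def eigenvector_def using A v vn by auto
qed



theorem mainTheorem4:
  fixes \<alpha> :: real and n s :: nat
  assumes "0 \<le> \<alpha>" and "\<alpha> < 1"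
    and "real n \<ge> f_bound \<alpha>"
    and "2 \<le> s" and "real s \<le> (real n - 2) / 3"
  shows "rho_alpha \<alpha> (graph_join (complete_graph s)
           (graph_union (complete_graph (n - 3 * s)) (edgeless_graph (2 * s)))) < eta \<alpha> n"
proof -
  note a0 = assms(1) and a1 = assms(2) and s2 = assms(4)
  have bn: "(1-\<alpha>) * real n \<ge> 5" and n6: "real n \<ge> 6" using fb[OF assms(1-3)] by auto
  have "3 * real s + 2 \<le> real n" using assms(5) by simp
  hence "real (3*s+2) \<le> real n" by simp
  hence sn: "3*s + 2 \<le> n" by (simp only: of_nat_le_iff)
  have sn3: "3*s \<le> n" using sn by simp
  define A where "A = A_alpha \<alpha> (GG n s)"
  have A: "A \<in> carrier_mat n n" unfolding A_def by (rule A_carrier[OF sn3])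
  define E where "E = {x. eigenvalue A x}"
  have cp: "char_poly A \<noteq> 0"
    using degree_monic_char_poly[OF A] by (metis coeff_0 zero_neq_one)
  have finE: "finite E" unfolding E_def eigenvalue_root_char_poly[OF A]
    using poly_roots_finite[OF cp] by simp
  have neE: "E \<noteq> {}" unfolding E_def A_def using eig_exists[OF sn] s2 by auto
  define D where "D = real n - 3 - \<alpha> * real s"
  define u where "u = (\<lambda>j. if j < s then D else if j < s + (n-3*s) then (1-\<alpha>)*D else (1-\<alpha>)*real s)"
  have Dpos: "D > 0"
  proof -
    have "\<alpha> * real s \<le> 1 * real s" using a1 by (intro mult_right_mono) auto
    moreover have "3 * real s + 2 \<le> real n" using assms(5) by simp
    ultimately show ?thesis unfolding D_def using s2 by linarith
  qed
  have up: "\<And>i. i < n \<Longrightarrow> u i > 0" unfolding u_def using Dpos a1 s2 by auto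
  have nn: "\<And>i j. i < n \<Longrightarrow> j < n \<Longrightarrow> A $$ (i,j) \<ge> 0"
    unfolding A_def using a0 a1 sn3 by (auto simp: A_entry)
  have row: "\<And>i. i < n \<Longrightarrow> (\<Sum>j<n. A $$ (i,j) * u j) \<le> (real n - 3) * u i"
    unfolding A_def u_def D_def by (rule rows[OF a0 a1 s2 sn bn])
  have bd: "\<And>x. x \<in> E \<Longrightarrow> x \<le> real n - 3"
  proof -
    fix x assume "x \<in> E"
    hence "\<bar>x\<bar> \<le> real n - 3" unfolding E_def using eig_bound[OF A nn up row] by auto
    thus "x \<le> real n - 3" by simp
  qed
  have "rho_alpha \<alpha> (GG n s) \<le> real n - 3"
    unfolding rho_alpha_def A_def[symmetric] E_def[symmetric] using finE neE bd by simp
  moreover have "eta \<alpha> n > real n - 3" by (rule eta_gt) (use a0 a1 n6 in auto)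
  ultimately show ?thesis unfolding GG_def by simp
qed


end
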